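(* Let $G$ be a twin-free simple graph on vertex set $\{1,\dots,n\}$, and suppose that for some $1\le m\le n$ the set $M=\{1,2,\dots,m\}$ is an identifying code of $G$. Then the lexicographic algorithm (Algorithm 1) applied to $G$ returns an identifying code $C$ with $C\subseteq M$.
   Context: Vertices of $G$ are identified with the integers $1,\dots,n$ and ordered by the usual order. For a vertex $v$, $N(v)=\{v\}\cup\{w : vw\in E(G)\}$ is its closed neighbourhood. A set $C\subseteq V(G)$ is an identifying code if the sets $N(v)\cap C$, $v\in V(G)$, are all nonempty and pairwise distinct. $G$ is twin-free if $N(v)\neq N(w)$ for all distinct vertices $v,w$. The lexicographic algorithm (Algorithm 1): set $C_0=\emptyset$. For $j=1,2,\dots,n$ in turn: (i) if $N(j)\cap C_{j-1}=\emptyset$, set $C_j=C_{j-1}\cup\{\min N(j)\}$; (ii) otherwise, if there exists $k\in\{1,\dots,j-1\}$ with $N(k)\cap C_{j-1}=N(j)\cap C_{j-1}$, let $k$ be the least such index; if $N(j)\neq N(k)$ set $C_j=C_{j-1}\cup\{\min(N(j)\triangle N(k))\}$, while if $N(j)=N(k)$ the algorithm stops immediately and returns "failure"; (iii) otherwise set $C_j=C_{j-1}$. If the algorithm never fails, it returns $C_n$. Here $\triangle$ denotes symmetric difference. *)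

theory Defs
  imports Main
begin

definition simple_graph :: "nat \<Rightarrow> (nat \<Rightarrow> nat \<Rightarrow> bool) \<Rightarrow> bool" where
  "simple_graph n E \<longleftrightarrow>
     (\<forall>v w. E v w \<longrightarrow> E w v) \<and> (\<forall>v. \<not> E v v) \<and>
     (\<forall>v w. E v w \<longrightarrow> v \<in> {1..n} \<and> w \<in> {1..n})"

definition nbh :: "(nat \<Rightarrow> nat \<Rightarrow> bool) \<Rightarrow> nat \<Rightarrow> nat set" where
  "nbh E v = insert v {w. E v w}"

definition twin_free :: "nat \<Rightarrow> (nat \<Rightarrow> nat \<Rightarrow> bool) \<Rightarrow> bool" where
  "twin_free n E \<longleftrightarrow>
     (\<forall>v\<in>{1..n}. \<forall>w\<in>{1..n}. v \<noteq> w \<longrightarrow> nbh E v \<noteq> nbh E w)"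

definition identifying_code :: "nat \<Rightarrow> (nat \<Rightarrow> nat \<Rightarrow> bool) \<Rightarrow> nat set \<Rightarrow> bool" where
  "identifying_code n E C \<longleftrightarrow>
     C \<subseteq> {1..n} \<and>
     (\<forall>v\<in>{1..n}. nbh E v \<inter> C \<noteq> {}) \<and>
     (\<forall>v\<in>{1..n}. \<forall>w\<in>{1..n}. v \<noteq> w \<longrightarrow> nbh E v \<inter> C \<noteq> nbh E w \<inter> C)"

definition symdiff :: "'a set \<Rightarrow> 'a set \<Rightarrow> 'a set" where
  "symdiff A B = (A - B) \<union> (B - A)"

text \<open>One step (processing vertex j) of the lexicographic algorithm;
  None represents "failure".\<close>
definition lex_step :: "(nat \<Rightarrow> nat \<Rightarrow> bool) \<Rightarrow> nat \<Rightarrow> nat set option \<Rightarrow> nat set option" where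
  "lex_step E j st = (case st of
      None \<Rightarrow> None
    | Some C \<Rightarrow>
        (if nbh E j \<inter> C = {} then Some (insert (Min (nbh E j)) C)
         else if (\<exists>k\<in>{1..<j}. nbh E k \<inter> C = nbh E j \<inter> C) then
           (let k = (LEAST k. k \<in> {1..<j} \<and> nbh E k \<inter> C = nbh E j \<inter> C) in
              if nbh E j \<noteq> nbh E k
              then Some (insert (Min (symdiff (nbh E j) (nbh E k))) C)
              else None)
         else Some C))"

definition lex_alg :: "nat \<Rightarrow> (nat \<Rightarrow> nat \<Rightarrow> bool) \<Rightarrow> nat set option" where
  "lex_alg n E = fold (lex_step E) [1..<n+1] (Some {})"

end

theory Submission
  imports Defs
begin

lemma mono_ne: "C \<subseteq> C' \<Longrightarrow> A \<inter> C \<noteq> B \<inter> C \<Longrightarrow> A \<inter> C' \<noteq> B \<inter> C'"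
  by blast

lemma combine:
  assumes "C \<subseteq> C'" "1 \<le> j"
    and ne: "\<forall>v\<in>{1..<j}. nbh E v \<inter> C \<noteq> {}"
    and sep: "\<forall>v\<in>{1..<j}. \<forall>w\<in>{1..<j}. v \<noteq> w \<longrightarrow> nbh E v \<inter> C \<noteq> nbh E w \<inter> C"
    and nj: "nbh E j \<inter> C' \<noteq> {}"
    and sj: "\<forall>w\<in>{1..<j}. nbh E j \<inter> C' \<noteq> nbh E w \<inter> C'"
  shows "(\<forall>v\<in>{1..<Suc j}. nbh E v \<inter> C' \<noteq> {}) \<and>
         (\<forall>v\<in>{1..<Suc j}. \<forall>w\<in>{1..<Suc j}. v \<noteq> w \<longrightarrow> nbh E v \<inter> C' \<noteq> nbh E w \<inter> C')"
proof -
  have I: "{1..<Suc j} = insert j {1..<j}" using assms(2) by auto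
  have a: "\<forall>v\<in>{1..<j}. nbh E v \<inter> C' \<noteq> {}" using ne assms(1) by blast
  have b: "\<forall>v\<in>{1..<j}. \<forall>w\<in>{1..<j}. v \<noteq> w \<longrightarrow> nbh E v \<inter> C' \<noteq> nbh E w \<inter> C'"
    using sep mono_ne[OF assms(1)] by blast
  show ?thesis unfolding I ball_simps using a b nj sj by (metis (no_types, lifting))
qed

lemma nbh_sub:
  assumes "simple_graph n E" "v \<in> {1..n}"
  shows "nbh E v \<subseteq> {1..n}"
  using assms unfolding simple_graph_def nbh_def by auto

lemma nbh_fin:
  assumes "simple_graph n E"
  shows "finite (nbh E v)"
proof -
  have "{w. E v w} \<subseteq> {1..n}" using assms unfolding simple_graph_def by auto
  then show ?thesis unfolding nbh_def by (simp add: finite_subset)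
qed

lemma min_in:
  assumes "finite S" "S \<subseteq> {1..n}" "x \<in> S" "x \<le> m"
  shows "Min S \<in> {1..m}" "Min S \<in> S"
proof -
  have "S \<noteq> {}" using assms by auto
  then have "Min S \<in> S" using assms(1) by simp
  moreover have "Min S \<le> x" using assms by simp
  moreover have "Min S \<ge> 1" using \<open>Min S \<in> S\<close> assms(2) by auto
  ultimately show "Min S \<in> {1..m}" "Min S \<in> S" using assms(4) by auto
qed

lemma step:
  assumes sg: "simple_graph n E" and tf: "twin_free n E" and mn: "m \<le> n"
    and ic: "identifying_code n E {1..m}" and j1: "1 \<le> j" and jn: "j \<le> n"
    and sub: "C \<subseteq> {1..m}"
    and ne: "\<forall>v\<in>{1..<j}. nbh E v \<inter> C \<noteq> {}"
    and sep: "\<forall>v\<in>{1..<j}. \<forall>w\<in>{1..<j}. v \<noteq> w \<longrightarrow> nbh E v \<inter> C \<noteq> nbh E w \<inter> C"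
  shows "\<exists>C'. lex_step E j (Some C) = Some C' \<and> C' \<subseteq> {1..m} \<and>
         (\<forall>v\<in>{1..<Suc j}. nbh E v \<inter> C' \<noteq> {}) \<and>
         (\<forall>v\<in>{1..<Suc j}. \<forall>w\<in>{1..<Suc j}. v \<noteq> w \<longrightarrow> nbh E v \<inter> C' \<noteq> nbh E w \<inter> C')"
proof -
  have jN: "j \<in> {1..n}" using j1 jn by auto
  have finj: "finite (nbh E j)" using nbh_fin[OF sg] .
  have subj: "nbh E j \<subseteq> {1..n}" using nbh_sub[OF sg jN] .
  show ?thesis
  proof (cases "nbh E j \<inter> C = {}")
    case True
    define x where "x = Min (nbh E j)"
    obtain y where y: "y \<in> nbh E j" "y \<in> {1..m}" using ic jN unfolding identifying_code_def by blast
    have x: "x \<in> {1..m}" "x \<in> nbh E j" using min_in[OF finj subj y(1)] y(2) unfolding x_def by auto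
    have ls: "lex_step E j (Some C) = Some (insert x C)" using True unfolding lex_step_def x_def by simp
    have sj: "\<forall>w\<in>{1..<j}. nbh E j \<inter> insert x C \<noteq> nbh E w \<inter> insert x C"
    proof
      fix w assume w: "w \<in> {1..<j}"
      then obtain z where "z \<in> nbh E w" "z \<in> C" using ne by blast
      then show "nbh E j \<inter> insert x C \<noteq> nbh E w \<inter> insert x C" using True by blast
    qed
    have "(\<forall>v\<in>{1..<Suc j}. nbh E v \<inter> insert x C \<noteq> {}) \<and>
         (\<forall>v\<in>{1..<Suc j}. \<forall>w\<in>{1..<Suc j}. v \<noteq> w \<longrightarrow> nbh E v \<inter> insert x C \<noteq> nbh E w \<inter> insert x C)"
      by (rule combine[OF _ j1 ne sep _ sj]) (use x in auto)
    then show ?thesis using ls sub x by blast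
  next
    case F: False
    show ?thesis
    proof (cases "\<exists>k\<in>{1..<j}. nbh E k \<inter> C = nbh E j \<inter> C")
      case True
      define k where "k = (LEAST k. k \<in> {1..<j} \<and> nbh E k \<inter> C = nbh E j \<inter> C)"
      have k: "k \<in> {1..<j}" "nbh E k \<inter> C = nbh E j \<inter> C"
        using LeastI_ex[of "\<lambda>k. k \<in> {1..<j} \<and> nbh E k \<inter> C = nbh E j \<inter> C"] True
        unfolding k_def by blast+
      have kN: "k \<in> {1..n}" using k jn by auto
      have kj: "nbh E j \<noteq> nbh E k" using tf jN kN k(1) unfolding twin_free_def by auto
      define S where "S = symdiff (nbh E j) (nbh E k)"
      define x where "x = Min S"
      have finS: "finite S" unfolding S_def symdiff_def using finj nbh_fin[OF sg, of k] by auto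
      have subS: "S \<subseteq> {1..n}" unfolding S_def symdiff_def using subj nbh_sub[OF sg kN] by auto
      have "nbh E j \<inter> {1..m} \<noteq> nbh E k \<inter> {1..m}" using ic jN kN k(1) unfolding identifying_code_def by auto
      then obtain y where y: "y \<in> S" "y \<in> {1..m}" unfolding S_def symdiff_def by blast
      have x: "x \<in> {1..m}" "x \<in> S" using min_in[OF finS subS y(1)] y(2) unfolding x_def by auto
      have ls: "lex_step E j (Some C) = Some (insert x C)"
        using F True kj unfolding lex_step_def x_def S_def k_def by (simp add: Let_def)
      have sj: "\<forall>w\<in>{1..<j}. nbh E j \<inter> insert x C \<noteq> nbh E w \<inter> insert x C"
      proof
        fix w assume w: "w \<in> {1..<j}"
        show "nbh E j \<inter> insert x C \<noteq> nbh E w \<inter> insert x C"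
        proof (cases "w = k")
          case True
          then show ?thesis using x(2) unfolding S_def symdiff_def by blast
        next
          case False
          then have "nbh E w \<inter> C \<noteq> nbh E k \<inter> C" using sep w k(1) by blast
          then show ?thesis using k(2) by blast
        qed
      qed
      have "(\<forall>v\<in>{1..<Suc j}. nbh E v \<inter> insert x C \<noteq> {}) \<and>
         (\<forall>v\<in>{1..<Suc j}. \<forall>w\<in>{1..<Suc j}. v \<noteq> w \<longrightarrow> nbh E v \<inter> insert x C \<noteq> nbh E w \<inter> insert x C)"
        by (rule combine[OF _ j1 ne sep _ sj]) (use F in auto)
      then show ?thesis using ls sub x by blast
    next
      case False
      have ls: "lex_step E j (Some C) = Some C" using F False unfolding lex_step_def by simp
      have sj: "\<forall>w\<in>{1..<j}. nbh E j \<inter> C \<noteq> nbh E w \<inter> C" using False by metis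
      have "(\<forall>v\<in>{1..<Suc j}. nbh E v \<inter> C \<noteq> {}) \<and>
         (\<forall>v\<in>{1..<Suc j}. \<forall>w\<in>{1..<Suc j}. v \<noteq> w \<longrightarrow> nbh E v \<inter> C \<noteq> nbh E w \<inter> C)"
        by (rule combine[OF _ j1 ne sep F sj]) auto
      then show ?thesis using ls sub by blast
    qed
  qed
qed

theorem proposition2:
  fixes n m :: nat and E :: "nat \<Rightarrow> nat \<Rightarrow> bool"
  assumes "simple_graph n E"
    and "twin_free n E"
    and "1 \<le> m" and "m \<le> n"
    and "identifying_code n E {1..m}"
  shows "\<exists>C. lex_alg n E = Some C \<and> identifying_code n E C \<and> C \<subseteq> {1..m}"
proof -
  have main: "k \<le> n \<Longrightarrow> \<exists>C. fold (lex_step E) [1..<k+1] (Some {}) = Some C \<and> C \<subseteq> {1..m} \<and>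
         (\<forall>v\<in>{1..<Suc k}. nbh E v \<inter> C \<noteq> {}) \<and>
         (\<forall>v\<in>{1..<Suc k}. \<forall>w\<in>{1..<Suc k}. v \<noteq> w \<longrightarrow> nbh E v \<inter> C \<noteq> nbh E w \<inter> C)" for k
  proof (induction k)
    case 0
    then show ?case by simp
  next
    case (Suc k)
    then obtain C where C: "fold (lex_step E) [1..<k+1] (Some {}) = Some C" "C \<subseteq> {1..m}"
         "\<forall>v\<in>{1..<Suc k}. nbh E v \<inter> C \<noteq> {}"
         "\<forall>v\<in>{1..<Suc k}. \<forall>w\<in>{1..<Suc k}. v \<noteq> w \<longrightarrow> nbh E v \<inter> C \<noteq> nbh E w \<inter> C" by auto
    have f: "fold (lex_step E) [1..<Suc k+1] (Some {}) = lex_step E (Suc k) (Some C)"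
      using C(1) by simp
    show ?case unfolding f
      using step[OF assms(1,2,4,5), of "Suc k" C] C Suc.prems by simp
  qed
  from main[of n] obtain C where C: "lex_alg n E = Some C" "C \<subseteq> {1..m}"
         "\<forall>v\<in>{1..<Suc n}. nbh E v \<inter> C \<noteq> {}"
         "\<forall>v\<in>{1..<Suc n}. \<forall>w\<in>{1..<Suc n}. v \<noteq> w \<longrightarrow> nbh E v \<inter> C \<noteq> nbh E w \<inter> C"
    unfolding lex_alg_def by auto
  have "{1..<Suc n} = {1..n}" by auto
  then have "identifying_code n E C" unfolding identifying_code_def using C assms(4) by auto
  then show ?thesis using C by blast
qed

end
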